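(* Let $h:\mathbb R\to\mathbb R$ be strictly increasing and continuous on $[0,1]$ and $\beta\in(0,1)$ with $\nu_k\le h(\beta^k)$ for all $k\in\mathbb N$ and $\{k:\nu_k>h(0)\}\neq\emptyset$. Let $\omega(s)=\min\{h(1),\max\{s,h(0)\}\}$ and $$V(x)=\sup_{k\in\mathbb N}\beta^{-k}\,h^{-1}_{[0,1]}\big(\omega(\varphi(T^k(x)))\big),\quad x\in\mathbb R^d.$$ Then $V$ is an Opt-Lyapunov function for $(X^{\rm in},T)$ (with $V\circ T\le\beta V$). Moreover the function $\hat h$ defined by $\hat h(s)=s-h(0)$ for $s\le h(0)$ and $\hat h(s)=h^{-1}_{[0,1]}(s)$ for $s\in(h(0),h(1)]$ (extended arbitrarily to $\mathbb R$) is an $(X^{\rm in},T,\varphi)$-certificate of compatibility for $V$; in particular $V$ is $(X^{\rm in},T,\varphi)$-compatible.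
   Context: Standing data: nonempty $X^{\rm in}\subseteq\mathbb R^d$, $T:\mathbb R^d\to\mathbb R^d$, $\varphi:\mathbb R^d\to\mathbb R$ with $\varphi(0)=0$, $\nu_k=\sup_{x\in X^{\rm in}}\varphi(T^k(x))$ finite for all $k$; $G^{>}_\nu=\{k:\nu_k>\limsup_n\nu_n\}$. $h^{-1}_{[0,1]}:[h(0),h(1)]\to[0,1]$ is the inverse of $h|_{[0,1]}$. An Opt-Lyapunov function for $(X^{\rm in},T)$ is $V:\mathbb R^d\to[0,+\infty]$ with $\sup_{X^{\rm in}}V\in(0,1]$ and $V\circ T\le\lambda V$ for some $\lambda\in(0,1)$. $I^\varphi=\overline{\operatorname{conv}}\{\varphi(T^k(x)):k\in\mathbb N,x\in X^{\rm in}\}$. $\mathrm{SC}$: functions $\alpha:\mathbb R\to\mathbb R$ with an interval $I$ such that $\alpha(I)=[0,1]$ and $\alpha$ strictly increasing continuous on $\operatorname{conv}(I^\varphi\cup I)$. An $(X^{\rm in},T,\varphi)$-certificate of compatibility for $g$ is $\alpha\in\mathrm{SC}$ with $\alpha(\nu_k)>0$ for some $k\in G^{>}_\nu$ and $\alpha(\varphi(T^k(x)))\le g(T^k(x))$ for all $k\in\mathbb N$, $x\in X^{\rm in}$. $g$ is $(X^{\rm in},T,\varphi)$-compatible if for some $k\in G^{>}_\nu$ there are $\varepsilon,\eta>0$ with: $x\in X^{\rm in}$, $j\in\mathbb N$, $\varphi(T^j(x))>\nu_k-\eta$ imply $g(T^j(x))>\varepsilon$. *)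

theory Defs
  imports "HOL-Analysis.Analysis"
begin

text \<open>Points of R^d are modelled as elements of real^'n (d = CARD('n)).
  Values in [0,+infinity] are modelled in ereal together with nonnegativity.\<close>

definition nu :: "(real^'n) set \<Rightarrow> (real^'n \<Rightarrow> real^'n) \<Rightarrow> (real^'n \<Rightarrow> real) \<Rightarrow> nat \<Rightarrow> real" where
  "nu X T \<phi> k = (SUP x\<in>X. \<phi> ((T ^^ k) x))"

definition Ggt :: "(real^'n) set \<Rightarrow> (real^'n \<Rightarrow> real^'n) \<Rightarrow> (real^'n \<Rightarrow> real) \<Rightarrow> nat set" where
  "Ggt X T \<phi> = {k. ereal (nu X T \<phi> k) > limsup (\<lambda>n. ereal (nu X T \<phi> n))}"

definition opt_lyapunov :: "(real^'n) set \<Rightarrow> (real^'n \<Rightarrow> real^'n) \<Rightarrow> (real^'n \<Rightarrow> ereal) \<Rightarrow> bool" where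
  "opt_lyapunov X T V \<longleftrightarrow>
     (\<forall>x. 0 \<le> V x) \<and>
     0 < (SUP x\<in>X. V x) \<and> (SUP x\<in>X. V x) \<le> 1 \<and>
     (\<exists>lam::real. 0 < lam \<and> lam < 1 \<and> (\<forall>x. V (T x) \<le> ereal lam * V x))"

definition Iphi :: "(real^'n) set \<Rightarrow> (real^'n \<Rightarrow> real^'n) \<Rightarrow> (real^'n \<Rightarrow> real) \<Rightarrow> real set" where
  "Iphi X T \<phi> = closure (convex hull {\<phi> ((T ^^ k) x) | k x. x \<in> X})"

definition SC :: "(real^'n) set \<Rightarrow> (real^'n \<Rightarrow> real^'n) \<Rightarrow> (real^'n \<Rightarrow> real) \<Rightarrow> (real \<Rightarrow> real) \<Rightarrow> bool" where
  "SC X T \<phi> \<alpha> \<longleftrightarrow> (\<exists>I::real set. is_interval I \<and> \<alpha> ` I = {0..1} \<and>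
       strict_mono_on (convex hull (Iphi X T \<phi> \<union> I)) \<alpha> \<and>
       continuous_on (convex hull (Iphi X T \<phi> \<union> I)) \<alpha>)"

definition certificate :: "(real^'n) set \<Rightarrow> (real^'n \<Rightarrow> real^'n) \<Rightarrow> (real^'n \<Rightarrow> real) \<Rightarrow>
    (real^'n \<Rightarrow> ereal) \<Rightarrow> (real \<Rightarrow> real) \<Rightarrow> bool" where
  "certificate X T \<phi> g \<alpha> \<longleftrightarrow> SC X T \<phi> \<alpha> \<and>
     (\<exists>k\<in>Ggt X T \<phi>. \<alpha> (nu X T \<phi> k) > 0) \<and>
     (\<forall>k x. x \<in> X \<longrightarrow> ereal (\<alpha> (\<phi> ((T ^^ k) x))) \<le> g ((T ^^ k) x))"

definition compatible :: "(real^'n) set \<Rightarrow> (real^'n \<Rightarrow> real^'n) \<Rightarrow> (real^'n \<Rightarrow> real) \<Rightarrow>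
    (real^'n \<Rightarrow> ereal) \<Rightarrow> bool" where
  "compatible X T \<phi> g \<longleftrightarrow> (\<exists>k\<in>Ggt X T \<phi>. \<exists>\<epsilon>>0. \<exists>\<eta>>0.
     \<forall>x\<in>X. \<forall>j. \<phi> ((T ^^ j) x) > nu X T \<phi> k - \<eta> \<longrightarrow> g ((T ^^ j) x) > ereal \<epsilon>)"

definition omega :: "(real \<Rightarrow> real) \<Rightarrow> real \<Rightarrow> real" where
  "omega h s = min (h 1) (max s (h 0))"

definition Vfun :: "(real \<Rightarrow> real) \<Rightarrow> real \<Rightarrow> (real^'n \<Rightarrow> real^'n) \<Rightarrow> (real^'n \<Rightarrow> real) \<Rightarrow> real^'n \<Rightarrow> ereal" where
  "Vfun h \<beta> T \<phi> x = (SUP k::nat. ereal (inverse (\<beta> ^ k) *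
       the_inv_into {0..1} h (omega h (\<phi> ((T ^^ k) x)))))"

end

theory Submission
  imports Defs
begin

lemma h_img:
  fixes h :: "real \<Rightarrow> real"
  assumes mono: "strict_mono_on {0..1} h" and cont: "continuous_on {0..1} h"
  shows "h ` {0..1} = {h 0..h 1}"
proof
  show "h ` {0..1} \<subseteq> {h 0..h 1}"
    using strict_mono_on_leD[OF mono] by fastforce
  show "{h 0..h 1} \<subseteq> h ` {0..1}"
  proof
    fix y assume "y \<in> {h 0..h 1}"
    then obtain x where "0 \<le> x" "x \<le> 1" "h x = y"
      using IVT'[of h 0 y 1] cont by auto
    then show "y \<in> h ` {0..1}" by force
  qed
qed

lemma hinv_props:
  fixes h :: "real \<Rightarrow> real"
  assumes mono: "strict_mono_on {0..1} h" and cont: "continuous_on {0..1} h"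
  shows "\<And>y. y \<in> {h 0..h 1} \<Longrightarrow> the_inv_into {0..1} h y \<in> {0..1}"
    and "\<And>y. y \<in> {h 0..h 1} \<Longrightarrow> h (the_inv_into {0..1} h y) = y"
    and "\<And>t. t \<in> {0..1} \<Longrightarrow> the_inv_into {0..1} h (h t) = t"
    and "\<And>y z. y \<in> {h 0..h 1} \<Longrightarrow> z \<in> {h 0..h 1} \<Longrightarrow> y < z \<Longrightarrow>
            the_inv_into {0..1} h y < the_inv_into {0..1} h z"
    and "continuous_on {h 0..h 1} (the_inv_into {0..1} h)"
proof -
  have inj: "inj_on h {0..1}" by (rule strict_mono_on_imp_inj_on[OF mono])
  note img = h_img[OF mono cont]
  show A: "\<And>y. y \<in> {h 0..h 1} \<Longrightarrow> the_inv_into {0..1} h y \<in> {0..1}"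
    using the_inv_into_into[OF inj _ order_refl] img by auto
  show B: "\<And>y. y \<in> {h 0..h 1} \<Longrightarrow> h (the_inv_into {0..1} h y) = y"
    using f_the_inv_into_f[OF inj] img by auto
  show "\<And>t. t \<in> {0..1} \<Longrightarrow> the_inv_into {0..1} h (h t) = t"
    using the_inv_into_f_f[OF inj] by auto
  show "\<And>y z. y \<in> {h 0..h 1} \<Longrightarrow> z \<in> {h 0..h 1} \<Longrightarrow> y < z \<Longrightarrow>
            the_inv_into {0..1} h y < the_inv_into {0..1} h z"
  proof -
    fix y z assume y: "y \<in> {h 0..h 1}" and z: "z \<in> {h 0..h 1}" and yz: "y < z"
    show "the_inv_into {0..1} h y < the_inv_into {0..1} h z"
    proof (rule ccontr)
      assume "\<not> ?thesis"
      then have "h (the_inv_into {0..1} h z) \<le> h (the_inv_into {0..1} h y)"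
        using strict_mono_on_leD[OF mono A[OF z] A[OF y]] by simp
      then show False using B[OF y] B[OF z] yz by simp
    qed
  qed
  show "continuous_on {h 0..h 1} (the_inv_into {0..1} h)"
    using continuous_on_inv[OF cont compact_Icc, of "the_inv_into {0..1} h"]
      the_inv_into_f_f[OF inj] img by auto
qed


theorem mainTheorem19:
  fixes X :: "(real^'n) set" and T :: "real^'n \<Rightarrow> real^'n" and \<phi> :: "real^'n \<Rightarrow> real"
    and h :: "real \<Rightarrow> real" and \<beta> :: real
  assumes X_ne: "X \<noteq> {}"
    and phi0: "\<phi> 0 = 0"
    and nu_finite: "\<And>k. bdd_above ((\<lambda>x. \<phi> ((T ^^ k) x)) ` X)"
    and h_mono: "strict_mono_on {0..1} h"
    and h_cont: "continuous_on {0..1} h"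
    and beta: "0 < \<beta>" "\<beta> < 1"
    and nu_le: "\<And>k. nu X T \<phi> k \<le> h (\<beta> ^ k)"
    and nu_gt: "{k. nu X T \<phi> k > h 0} \<noteq> {}"
  shows "opt_lyapunov X T (Vfun h \<beta> T \<phi>)
    \<and> (\<forall>x. Vfun h \<beta> T \<phi> (T x) \<le> ereal \<beta> * Vfun h \<beta> T \<phi> x)
    \<and> (\<forall>hh::real \<Rightarrow> real.
          (\<forall>s. s \<le> h 0 \<longrightarrow> hh s = s - h 0) \<and>
          (\<forall>s. h 0 < s \<and> s \<le> h 1 \<longrightarrow> hh s = the_inv_into {0..1} h s)
          \<longrightarrow> certificate X T \<phi> (Vfun h \<beta> T \<phi>) hh)
    \<and> compatible X T \<phi> (Vfun h \<beta> T \<phi>)"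
proof -
  define hi where "hi = the_inv_into {0..1} h"
  define V where "V = Vfun h \<beta> T \<phi>"
  note HP = hinv_props[OF h_mono h_cont, folded hi_def]
  have h01: "h 0 < h 1" using strict_mono_on_less[OF h_mono] by simp
  have om: "\<And>s. omega h s \<in> {h 0..h 1}" using h01 by (auto simp: omega_def)
  have omid: "\<And>s. s \<in> {h 0..h 1} \<Longrightarrow> omega h s = s" by (auto simp: omega_def)
  have hi0: "hi (h 0) = 0" using HP(3)[of 0] by simp
  have hipos: "\<And>s. s \<in> {h 0<..h 1} \<Longrightarrow> hi s > 0"
    using HP(4)[of "h 0"] hi0 h01 by force
  have bk: "\<And>k. \<beta> ^ k \<in> {0..1}" using beta by (auto intro: power_le_one)
  have hbk: "\<And>k. h (\<beta> ^ k) \<in> {h 0..h 1}"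
    using strict_mono_on_leD[OF h_mono] bk by fastforce
  have Vge: "\<And>x k. ereal (inverse (\<beta> ^ k) * hi (omega h (\<phi> ((T ^^ k) x)))) \<le> V x"
    unfolding V_def Vfun_def hi_def by (rule SUP_upper) simp
  have V0: "\<And>x. ereal (hi (omega h (\<phi> x))) \<le> V x" using Vge[where k=0] by simp
  have Vnn: "\<And>x. 0 \<le> V x"
    using V0 HP(1)[OF om] by (meson atLeastAtMost_iff ereal_less_eq(5) order_trans)
  have phi_le: "\<And>x k. x \<in> X \<Longrightarrow> \<phi> ((T ^^ k) x) \<le> nu X T \<phi> k"
    unfolding nu_def using nu_finite by (rule cSUP_upper2) auto
  have phi_h1: "\<And>x k. x \<in> X \<Longrightarrow> \<phi> ((T ^^ k) x) \<le> h 1"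
    using phi_le nu_le hbk by (meson atLeastAtMost_iff order_trans)
  have term_le1: "\<And>x k. x \<in> X \<Longrightarrow> inverse (\<beta> ^ k) * hi (omega h (\<phi> ((T ^^ k) x))) \<le> 1"
  proof -
    fix x k assume x: "x \<in> X"
    have "omega h (\<phi> ((T ^^ k) x)) \<le> h (\<beta> ^ k)"
      using phi_le[OF x, of k] nu_le[of k] hbk[of k] by (auto simp: omega_def)
    then have "hi (omega h (\<phi> ((T ^^ k) x))) \<le> hi (h (\<beta> ^ k))"
      using HP(4)[OF om hbk, of "\<phi> ((T ^^ k) x)" k] by (cases "omega h (\<phi> ((T ^^ k) x)) = h (\<beta> ^ k)") auto
    also have "\<dots> = \<beta> ^ k" using HP(3)[OF bk] .
    finally have "hi (omega h (\<phi> ((T ^^ k) x))) \<le> \<beta> ^ k" .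
    then have "inverse (\<beta> ^ k) * hi (omega h (\<phi> ((T ^^ k) x))) \<le> inverse (\<beta> ^ k) * \<beta> ^ k"
      using beta by (intro mult_left_mono) auto
    then show "inverse (\<beta> ^ k) * hi (omega h (\<phi> ((T ^^ k) x))) \<le> 1" using beta by simp
  qed
  have VX1: "\<And>x. x \<in> X \<Longrightarrow> V x \<le> 1"
    unfolding V_def Vfun_def hi_def[symmetric] using term_le1 by (intro SUP_least) auto
  obtain k0 where k0: "nu X T \<phi> k0 > h 0" using nu_gt by auto
  then obtain x0 where x0: "x0 \<in> X" "\<phi> ((T ^^ k0) x0) > h 0"
    unfolding nu_def using less_cSUP_iff[OF X_ne nu_finite] by blast
  have Vx0: "V x0 > 0"
  proof -
    have s: "\<phi> ((T ^^ k0) x0) \<in> {h 0<..h 1}" using x0 phi_h1 by auto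
    then have "omega h (\<phi> ((T ^^ k0) x0)) = \<phi> ((T ^^ k0) x0)" using omid by auto
    then have "inverse (\<beta> ^ k0) * hi (omega h (\<phi> ((T ^^ k0) x0))) > 0"
      using hipos[OF s] beta by simp
    then have "0 < ereal (inverse (\<beta> ^ k0) * hi (omega h (\<phi> ((T ^^ k0) x0))))" by simp
    then show ?thesis using Vge[of k0 x0] by (rule order.strict_trans2)
  qed
  have VT: "\<And>x. V (T x) \<le> ereal \<beta> * V x"
  proof -
    fix x
    show "V (T x) \<le> ereal \<beta> * V x"
      unfolding V_def Vfun_def[of h \<beta> T \<phi> "T x"]
    proof (rule SUP_least)
      fix k :: nat
      have eq: "(T ^^ k) (T x) = (T ^^ Suc k) x" by (simp only: funpow_Suc_right comp_def)
      have iq: "inverse (\<beta> ^ k) = \<beta> * inverse (\<beta> ^ Suc k)" using beta by (simp add: field_simps)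
      have "ereal (inverse (\<beta> ^ k) * the_inv_into {0..1} h (omega h (\<phi> ((T ^^ k) (T x)))))
          = ereal \<beta> * ereal (inverse (\<beta> ^ Suc k) * hi (omega h (\<phi> ((T ^^ Suc k) x))))"
        unfolding eq hi_def by (simp only: iq times_ereal.simps mult.assoc)
      also have "\<dots> \<le> ereal \<beta> * Vfun h \<beta> T \<phi> x"
        using Vge[unfolded V_def, of "Suc k" x] beta by (intro ereal_mult_left_mono) auto
      finally show "ereal (inverse (\<beta> ^ k) * the_inv_into {0..1} h (omega h (\<phi> ((T ^^ k) (T x))))) \<le> ereal \<beta> * Vfun h \<beta> T \<phi> x" .
    qed
  qed
  have lyap: "opt_lyapunov X T V"
    unfolding opt_lyapunov_def
  proof (intro conjI)
    show "\<forall>x. 0 \<le> V x" using Vnn by auto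
    show "0 < (SUP x\<in>X. V x)" using Vx0 x0(1) by (meson SUP_upper less_le_trans)
    show "(SUP x\<in>X. V x) \<le> 1" using VX1 by (rule SUP_least)
    show "\<exists>lam. 0 < lam \<and> lam < 1 \<and> (\<forall>x. V (T x) \<le> ereal lam * V x)"
      using VT beta by blast
  qed
  have lim: "limsup (\<lambda>n. ereal (nu X T \<phi> n)) \<le> ereal (h 0)"
  proof -
    have "(\<lambda>n. h (\<beta> ^ n)) \<longlonglongrightarrow> h 0"
      using continuous_on_tendsto_compose[OF h_cont LIMSEQ_power_zero[of \<beta>]] beta bk by auto
    then have "(\<lambda>n. ereal (h (\<beta> ^ n))) \<longlonglongrightarrow> ereal (h 0)" by (rule tendsto_ereal)
    then have "limsup (\<lambda>n. ereal (h (\<beta> ^ n))) = ereal (h 0)"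
      by (intro lim_imp_Limsup) auto
    moreover have "limsup (\<lambda>n. ereal (nu X T \<phi> n)) \<le> limsup (\<lambda>n. ereal (h (\<beta> ^ n)))"
      using nu_le by (intro Limsup_mono) auto
    ultimately show ?thesis by simp
  qed
  have k0G: "k0 \<in> Ggt X T \<phi>"
    unfolding Ggt_def using lim k0 by (auto intro: order.strict_trans1)
  have nuk0: "nu X T \<phi> k0 \<in> {h 0<..h 1}" using k0 nu_le[of k0] hbk[of k0] by auto
  have cert: "certificate X T \<phi> V hh"
    if hh1: "\<forall>s. s \<le> h 0 \<longrightarrow> hh s = s - h 0"
      and hh2: "\<forall>s. h 0 < s \<and> s \<le> h 1 \<longrightarrow> hh s = the_inv_into {0..1} h s" for hh
  proof -
    have hh2': "\<And>s. s \<in> {h 0<..h 1} \<Longrightarrow> hh s = hi s" using hh2 hi_def by auto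
    define g where "g s = (if s \<le> h 0 then s - h 0 else hi s)" for s
    have hg: "\<And>s. s \<le> h 1 \<Longrightarrow> hh s = g s" using hh1 hh2' by (auto simp: g_def)
    have smg: "strict_mono_on {..h 1} hh"
    proof (rule strict_mono_onI)
      fix r s assume r: "r \<in> {..h 1}" and s: "s \<in> {..h 1}" and rs: "r < s"
      show "hh r < hh s"
      proof (cases "s \<le> h 0")
        case True then show ?thesis using rs hh1 by auto
      next
        case False
        then have ss: "s \<in> {h 0<..h 1}" using s by auto
        show ?thesis
        proof (cases "r \<le> h 0")
          case True then show ?thesis using hh1 hh2' hipos[OF ss] ss by auto
        next
          case False
          then show ?thesis using hh2' HP(4)[of r s] ss r rs by auto
        qed
      qed
    qed
    have cg: "continuous_on {..h 1} g"
      unfolding g_def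
    proof (rule continuous_on_cases_le)
      show "continuous_on {x \<in> {..h 1}. x \<le> h 0} (\<lambda>x. x - h 0)" by (intro continuous_intros)
      have "{x \<in> {..h 1}. h 0 \<le> x} = {h 0..h 1}" by auto
      then show "continuous_on {x \<in> {..h 1}. h 0 \<le> x} hi" using HP(5) by simp
      show "continuous_on {..h 1} (\<lambda>x. x)" by (intro continuous_intros)
      show "\<And>x. x \<in> {..h 1} \<Longrightarrow> x = h 0 \<Longrightarrow> x - h 0 = hi x" using hi0 by simp
    qed
    have chh: "continuous_on {..h 1} hh"
      using cg hg by (metis atMost_iff continuous_on_cong)
    have Iphi_sub: "Iphi X T \<phi> \<subseteq> {..h 1}"
      unfolding Iphi_def
      by (intro closure_minimal hull_minimal) (auto intro: phi_h1 convex_real_interval)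
    have C: "convex hull (Iphi X T \<phi> \<union> {h 0..h 1}) \<subseteq> {..h 1}"
      using Iphi_sub by (intro hull_minimal) (auto intro: convex_real_interval)
    have img: "hh ` {h 0..h 1} = {0..1}"
    proof
      show "hh ` {h 0..h 1} \<subseteq> {0..1}"
      proof
        fix y assume "y \<in> hh ` {h 0..h 1}"
        then obtain s where s: "s \<in> {h 0..h 1}" "y = hh s" by auto
        show "y \<in> {0..1}"
        proof (cases "s = h 0")
          case True then show ?thesis using s hh1 by auto
        next
          case False then show ?thesis using s hh2' HP(1)[of s] by auto
        qed
      qed
      show "{0..1} \<subseteq> hh ` {h 0..h 1}"
      proof
        fix t :: real assume t: "t \<in> {0..1}"
        show "t \<in> hh ` {h 0..h 1}"
        proof (cases "t = 0")
          case True
          then have "hh (h 0) = t" using hh1 by auto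
          then show ?thesis using h01 by (metis atLeastAtMost_iff image_eqI less_eq_real_def order_refl)
        next
          case False
          then have "h 0 < h t" using strict_mono_on_less[OF h_mono, of 0 t] t by auto
          moreover have "h t \<le> h 1" using strict_mono_on_leD[OF h_mono, of t 1] t by auto
          ultimately have "hh (h t) = t" using hh2' HP(3)[OF t] by auto
          then show ?thesis using \<open>h 0 < h t\<close> \<open>h t \<le> h 1\<close>
            by (metis atLeastAtMost_iff image_eqI less_eq_real_def)
        qed
      qed
    qed
    have SC: "SC X T \<phi> hh"
      unfolding SC_def
      by (intro exI[of _ "{h 0..h 1}"] conjI is_interval_cc img
          continuous_on_subset[OF chh C] monotone_on_subset[OF smg C])
    have pos: "hh (nu X T \<phi> k0) > 0" using hh2' nuk0 hipos by auto
    have le: "\<forall>k x. x \<in> X \<longrightarrow> ereal (hh (\<phi> ((T ^^ k) x))) \<le> V ((T ^^ k) x)"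
    proof (intro allI impI)
      fix k x assume x: "x \<in> X"
      let ?s = "\<phi> ((T ^^ k) x)"
      show "ereal (hh ?s) \<le> V ((T ^^ k) x)"
      proof (cases "?s \<le> h 0")
        case True
        then have "ereal (hh ?s) \<le> 0" using hh1 by auto
        then show ?thesis using Vnn order_trans by blast
      next
        case False
        then have ss: "?s \<in> {h 0<..h 1}" using phi_h1[OF x] by auto
        then have "hh ?s = hi (omega h ?s)" using hh2' omid by auto
        then show ?thesis using V0[of "(T ^^ k) x"] by simp
      qed
    qed
    show ?thesis unfolding certificate_def using SC pos le k0G by blast
  qed
  have comp: "compatible X T \<phi> V"
    unfolding compatible_def
  proof (intro bexI[OF _ k0G] exI conjI allI impI ballI)
    define m where "m = (nu X T \<phi> k0 + h 0) / 2"
    have m: "m \<in> {h 0<..h 1}" using nuk0 by (auto simp: m_def)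
    show "0 < hi m" using hipos[OF m] .
    show "0 < (nu X T \<phi> k0 - h 0) / 2" using nuk0 by auto
    fix x j assume x: "x \<in> X" and gt: "nu X T \<phi> k0 - (nu X T \<phi> k0 - h 0) / 2 < \<phi> ((T ^^ j) x)"
    let ?s = "\<phi> ((T ^^ j) x)"
    have ss: "?s \<in> {h 0..h 1}" "m < ?s" using gt phi_h1[OF x, of j] m unfolding m_def by (auto simp: field_simps)
    then have "hi m < hi (omega h ?s)" using HP(4)[of m ?s] m omid by auto
    then have "ereal (hi m) < ereal (hi (omega h ?s))" by simp
    then show "ereal (hi m) < V ((T ^^ j) x)" using V0[of "(T ^^ j) x"]
      by (rule order.strict_trans2)
  qed
  show ?thesis using lyap VT cert comp unfolding V_def by blast
qed

end
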